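(* Fix $n\ge1$ and $\kappa>0$. Let $\mho:\mathcal A_n^*\to(\mathrm{Mat}_n(\mathbb T),\odot)$ be the monoid homomorphism with $\mho(e)=E$ and $\mho(a_\ell)=A^{(\ell)}$ for $\ell=1,\dots,n$. Then for all $u,v\in\mathcal A_n^*$, $$u\equiv_{\mathrm{clk}}v\iff \mho(u)=\mho(v).$$ Hence $\mho$ induces a monoid isomorphism from the cloaktic monoid $\mathcal K_n=\mathcal A_n^*/{\equiv_{\mathrm{clk}}}$ onto the submonoid of $(\mathrm{Mat}_n(\mathbb T),\odot)$ generated by $A^{(1)},\dots,A^{(n)}$ (with identity $E$).
   Context: $\mathcal A_n=\{a_1<\cdots<a_n\}$, $e$ the empty word. Tropical semiring $\mathbb T=\mathbb R\cup\{-\infty\}$, $\oplus=\max$, $\odot=+$; $(A\odot B)_{i,j}=\max_t(a_{i,t}+b_{t,j})$. $A^{(\ell)}_{i,j}=\kappa$ if $i\le\ell\le j$, $=0$ if $i\le j$ but not $i\le\ell\le j$, $=-\infty$ if $i>j$; $E_{i,j}=0$ for $i\le j$, $-\infty$ for $i>j$. A subword is a not necessarily contiguous subsequence. For $w\in\mathcal A_n^*$ and $1\le i\le j\le n$, $L_{[i,j]}(w)$ is the maximal length of a nondecreasing subword of $w$ with all letters in $\{a_i,\dots,a_j\}$ ($0$ if none); $u\equiv_{\mathrm{clk}}v$ iff $L_{[i,j]}(u)=L_{[i,j]}(v)$ for all $1\le i\le j\le n$. *)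

theory Defs
  imports "HOL-Library.Extended_Real" "HOL-Library.Sublist"
begin

text \<open>Tropical semiring T = R with -infinity, represented inside ereal (the value
  +infinity never occurs). An n x n tropical matrix is a function
  nat => nat => ereal whose relevant entries are those with indices in {1..n};
  all entries outside {1..n} x {1..n} are set to -infinity, so that equality of
  matrices is plain function equality.\<close>

type_synonym tmat = "nat \<Rightarrow> nat \<Rightarrow> ereal"

definition trop_mult :: "nat \<Rightarrow> tmat \<Rightarrow> tmat \<Rightarrow> tmat" where
  "trop_mult n A B = (\<lambda>i j. if i \<in> {1..n} \<and> j \<in> {1..n}
      then Max ((\<lambda>t. A i t + B t j) ` {1..n}) else -\<infinity>)"

definition tropE :: "nat \<Rightarrow> tmat" where
  "tropE n = (\<lambda>i j. if i \<in> {1..n} \<and> j \<in> {1..n} \<and> i \<le> j then 0 else -\<infinity>)"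

definition tropA :: "nat \<Rightarrow> real \<Rightarrow> nat \<Rightarrow> tmat" where
  "tropA n \<kappa> l = (\<lambda>i j. if i \<in> {1..n} \<and> j \<in> {1..n} \<and> i \<le> j
      then (if i \<le> l \<and> l \<le> j then ereal \<kappa> else 0) else -\<infinity>)"

text \<open>Words over A_n: lists of letters, letter a_l is encoded as the number l,
  with l in {1..n}.\<close>

definition words :: "nat \<Rightarrow> nat list set" where
  "words n = {w. set w \<subseteq> {1..n}}"

fun mho :: "nat \<Rightarrow> real \<Rightarrow> nat list \<Rightarrow> tmat" where
  "mho n \<kappa> [] = tropE n"
| "mho n \<kappa> (l # w) = trop_mult n (tropA n \<kappa> l) (mho n \<kappa> w)"

definition Lij :: "nat \<Rightarrow> nat \<Rightarrow> nat list \<Rightarrow> nat" where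
  "Lij i j w = Max {length s | s. subseq s w \<and> sorted s \<and> set s \<subseteq> {i..j}}"

definition clk_equiv :: "nat \<Rightarrow> nat list \<Rightarrow> nat list \<Rightarrow> bool" where
  "clk_equiv n u v \<longleftrightarrow> (\<forall>i j. 1 \<le> i \<and> i \<le> j \<and> j \<le> n \<longrightarrow> Lij i j u = Lij i j v)"

inductive_set gen_submonoid :: "nat \<Rightarrow> real \<Rightarrow> tmat set" for n \<kappa> where
  unit: "tropE n \<in> gen_submonoid n \<kappa>"
| step: "M \<in> gen_submonoid n \<kappa> \<Longrightarrow> l \<in> {1..n} \<Longrightarrow>
         trop_mult n M (tropA n \<kappa> l) \<in> gen_submonoid n \<kappa>"

end

theory Submission
  imports Defs
begin

lemma max_swap:
  assumes "finite I" "I \<noteq> {}"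
  shows "(MAX t\<in>I. MAX s\<in>I. g t s) = (MAX s\<in>I. MAX t\<in>I. (g t s::'a::linorder))"
proof -
  have gen: "(MAX t\<in>I. MAX s\<in>I. h t s) \<le> (MAX s\<in>I. MAX t\<in>I. h t s)" for h :: "_ \<Rightarrow> _ \<Rightarrow> 'a"
  proof (rule Max.boundedI)
    show "finite ((\<lambda>t. MAX s\<in>I. h t s) ` I)" using assms by simp
    show "(\<lambda>t. MAX s\<in>I. h t s) ` I \<noteq> {}" using assms by simp
    fix x assume "x \<in> (\<lambda>t. MAX s\<in>I. h t s) ` I"
    then obtain t where t: "t \<in> I" "x = (MAX s\<in>I. h t s)" by auto
    have "h t s \<le> (MAX s\<in>I. MAX t\<in>I. h t s)" if s: "s \<in> I" for s
    proof -
      have "h t s \<le> (MAX t\<in>I. h t s)" using assms t s by (intro Max_ge) auto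
      also have "\<dots> \<le> (MAX s\<in>I. MAX t\<in>I. h t s)" using assms s by (intro Max_ge) auto
      finally show ?thesis .
    qed
    then show "x \<le> (MAX s\<in>I. MAX t\<in>I. h t s)" using t assms by (auto intro!: Max.boundedI)
  qed
  show ?thesis by (rule antisym) (rule gen, rule gen[of "\<lambda>s t. g t s"])
qed

lemma add_Max_l:
  assumes "finite I" "I \<noteq> {}"
  shows "(x::ereal) + (MAX s\<in>I. f s) = (MAX s\<in>I. x + f s)"
proof -
  have "mono (\<lambda>y. x + y)" by (auto intro: monoI add_left_mono)
  from mono_Max_commute[OF this, of "f ` I"] assms show ?thesis by (simp add: image_image)
qed

lemma add_Max_r:
  assumes "finite I" "I \<noteq> {}"
  shows "(MAX s\<in>I. f s) + (x::ereal) = (MAX s\<in>I. f s + x)"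
proof -
  have "mono (\<lambda>y. y + x)" by (auto intro: monoI add_right_mono)
  from mono_Max_commute[OF this, of "f ` I"] assms show ?thesis by (simp add: image_image)
qed

lemma trop_assoc:
  assumes "n \<ge> 1"
  shows "trop_mult n A (trop_mult n B C) = trop_mult n (trop_mult n A B) C"
proof (intro ext)
  fix i j
  have fin: "finite {1..n}" "{1..n} \<noteq> {}" using assms by auto
  show "trop_mult n A (trop_mult n B C) i j = trop_mult n (trop_mult n A B) C i j"
  proof (cases "i \<in> {1..n} \<and> j \<in> {1..n}")
    case True
    have "trop_mult n A (trop_mult n B C) i j = (MAX t\<in>{1..n}. A i t + (MAX s\<in>{1..n}. B t s + C s j))"
      using True unfolding trop_mult_def by (auto intro!: arg_cong[where f=Max] image_cong)
    also have "\<dots> = (MAX t\<in>{1..n}. MAX s\<in>{1..n}. A i t + (B t s + C s j))"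
      using fin by (simp add: add_Max_l)
    also have "\<dots> = (MAX s\<in>{1..n}. MAX t\<in>{1..n}. A i t + (B t s + C s j))"
      using fin by (rule max_swap)
    also have "\<dots> = (MAX s\<in>{1..n}. (MAX t\<in>{1..n}. A i t + B t s) + C s j)"
      using fin by (simp add: add_Max_r add.assoc)
    also have "\<dots> = trop_mult n (trop_mult n A B) C i j"
      using True unfolding trop_mult_def by (auto intro!: arg_cong[where f=Max] image_cong)
    finally show ?thesis .
  next
    case False thus ?thesis unfolding trop_mult_def by (simp only: if_not_P[OF False] if_False)
  qed
qed

fun lis :: "nat \<Rightarrow> nat \<Rightarrow> nat list \<Rightarrow> nat" where
  "lis i j [] = 0"
| "lis i j (l # w) = (if i \<le> l \<and> l \<le> j then max (lis i j w) (Suc (lis l j w)) else lis i j w)"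

lemma lis_Cons_ge: "lis i j w \<le> lis i j (l # w)"
  by simp

lemma lis_anti: "i \<le> i' \<Longrightarrow> lis i' j w \<le> lis i j w"
proof (induction w arbitrary: i i')
  case Nil then show ?case by simp
next
  case (Cons l w)
  show ?case
  proof (cases "i' \<le> l \<and> l \<le> j")
    case True
    have il: "i \<le> l" using Cons.prems True by simp
    have "lis i' j w \<le> lis i j w" using Cons.IH[OF Cons.prems] .
    then show ?thesis using True il by (simp add: max_def)
  next
    case False
    then have "lis i' j (l # w) = lis i' j w" by auto
    also have "\<dots> \<le> lis i j w" using Cons by blast
    also have "\<dots> \<le> lis i j (l # w)" by (rule lis_Cons_ge)
    finally show ?thesis .
  qed
qed

lemma lis_le: "subseq s w \<Longrightarrow> sorted s \<Longrightarrow> set s \<subseteq> {i..j} \<Longrightarrow> length s \<le> lis i j w"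
proof (induction w arbitrary: i s)
  case Nil then show ?case by simp
next
  case (Cons l w)
  show ?case
  proof (cases s)
    case Nil then show ?thesis by simp
  next
    case (Cons x s')
    show ?thesis
    proof (cases "x = l")
      case True
      have ss: "subseq s' w" using Cons.prems(1) \<open>s = x # s'\<close> True by (auto dest: subseq_Cons2')
      have so: "sorted s'" using Cons.prems(2) \<open>s = x # s'\<close> by simp
      have se: "set s' \<subseteq> {l..j}" using Cons.prems(2,3) \<open>s = x # s'\<close> True by auto
      have r: "i \<le> l \<and> l \<le> j" using Cons.prems(3) \<open>s = x # s'\<close> True by auto
      from Cons.IH[OF ss so se] r \<open>s = x # s'\<close> show ?thesis by auto
    next
      case False
      then have "subseq s w" using Cons.prems(1) \<open>s = x # s'\<close> by (auto dest: subseq_Cons2_neq)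
      from Cons.IH[OF this Cons.prems(2,3)] lis_Cons_ge[of i j w l] show ?thesis by linarith
    qed
  qed
qed

lemma lis_ex: "\<exists>s. subseq s w \<and> sorted s \<and> set s \<subseteq> {i..j} \<and> length s = lis i j w"
proof (induction w arbitrary: i)
  case Nil then show ?case by simp
next
  case (Cons l w)
  show ?case
  proof (cases "i \<le> l \<and> l \<le> j \<and> lis i j w \<le> Suc (lis l j w)")
    case True
    from Cons.IH[of l] obtain s where s: "subseq s w" "sorted s" "set s \<subseteq> {l..j}" "length s = lis l j w"
      by blast
    have "subseq (l # s) (l # w)" using s(1) by (rule subseq_Cons2)
    moreover have "sorted (l # s)" using s(2,3) by auto
    moreover have "set (l # s) \<subseteq> {i..j}" using s(3) True by auto
    moreover have "length (l # s) = lis i j (l # w)" using s(4) True by auto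
    ultimately show ?thesis by blast
  next
    case False
    from Cons.IH[of i] obtain s where s: "subseq s w" "sorted s" "set s \<subseteq> {i..j}" "length s = lis i j w"
      by blast
    have "subseq s (l # w)" using subseq_drop_many[OF s(1), of "[l]"] by simp
    moreover have "length s = lis i j (l # w)" using s(4) False by auto
    ultimately show ?thesis using s by blast
  qed
qed

lemma Lij_lis: "Lij i j w = lis i j w"
  unfolding Lij_def
proof (rule Max_eqI)
  show "finite {length s |s. subseq s w \<and> sorted s \<and> set s \<subseteq> {i..j}}"
    by (rule finite_subset[of _ "{..lis i j w}"]) (auto dest: lis_le)
  show "y \<le> lis i j w" if "y \<in> {length s |s. subseq s w \<and> sorted s \<and> set s \<subseteq> {i..j}}" for y
    using that by (auto dest: lis_le)
  show "lis i j w \<in> {length s |s. subseq s w \<and> sorted s \<and> set s \<subseteq> {i..j}}"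
    using lis_ex[of w i j] by force
qed

definition F :: "nat \<Rightarrow> real \<Rightarrow> nat list \<Rightarrow> tmat" where
  "F n \<kappa> w = (\<lambda>i j. if i \<in> {1..n} \<and> j \<in> {1..n} \<and> i \<le> j then ereal (\<kappa> * real (lis i j w)) else -\<infinity>)"

lemma term_eq:
  assumes "i \<in> {1..n}" "j \<in> {1..n}" "t \<in> {1..n}"
  shows "tropA n \<kappa> l i t + F n \<kappa> w t j =
    (if i \<le> t \<and> t \<le> j then ereal ((if i \<le> l \<and> l \<le> t then \<kappa> else 0) + \<kappa> * real (lis t j w)) else -\<infinity>)"
  using assms by (auto simp: tropA_def F_def)

lemma step_F:
  assumes k: "0 \<le> \<kappa>"
  shows "trop_mult n (tropA n \<kappa> l) (F n \<kappa> w) = F n \<kappa> (l # w)"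
proof (intro ext)
  fix i j
  show "trop_mult n (tropA n \<kappa> l) (F n \<kappa> w) i j = F n \<kappa> (l # w) i j"
  proof (cases "i \<in> {1..n} \<and> j \<in> {1..n}")
    case False thus ?thesis unfolding trop_mult_def F_def by auto
  next
    case True
    then have ij: "i \<in> {1..n}" "j \<in> {1..n}" by auto
    let ?S = "(\<lambda>t. tropA n \<kappa> l i t + F n \<kappa> w t j) ` {1..n}"
    have tm: "trop_mult n (tropA n \<kappa> l) (F n \<kappa> w) i j = Max ?S"
      using True by (simp add: trop_mult_def)
    show ?thesis
    proof (cases "i \<le> j")
      case False
      have "?S = (\<lambda>t. -\<infinity>) ` {1..n}"
        using False ij by (intro image_cong) (auto simp: term_eq)
      moreover have "{1..n} \<noteq> {}" using ij by auto
      ultimately have "Max ?S = -\<infinity>" by simp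
      then show ?thesis using tm False by (simp add: F_def)
    next
      case True
      let ?T = "ereal (\<kappa> * real (lis i j (l # w)))"
      have "Max ?S = ?T"
      proof (rule Max_eqI)
        show "finite ?S" by simp
        fix y assume "y \<in> ?S"
        then obtain t where t: "t \<in> {1..n}" "y = tropA n \<kappa> l i t + F n \<kappa> w t j" by auto
        show "y \<le> ?T"
        proof (cases "i \<le> t \<and> t \<le> j")
          case False then show ?thesis unfolding t(2) term_eq[OF ij t(1)] if_not_P[OF False] by simp
        next
          case tin: True
          have "(if i \<le> l \<and> l \<le> t then \<kappa> else 0) + \<kappa> * real (lis t j w) \<le> \<kappa> * real (lis i j (l # w))"
          proof (cases "i \<le> l \<and> l \<le> t")
            case c: True
            have "lis t j w \<le> lis l j w" using c by (intro lis_anti) simp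
            moreover have "Suc (lis l j w) \<le> lis i j (l # w)" using c tin by simp
            ultimately have "real (Suc (lis t j w)) \<le> real (lis i j (l # w))" by linarith
            then have "\<kappa> * real (Suc (lis t j w)) \<le> \<kappa> * real (lis i j (l # w))"
              using k by (rule mult_left_mono)
            then show ?thesis using c by (simp add: algebra_simps)
          next
            case c: False
            have "lis t j w \<le> lis i j w" using tin by (intro lis_anti) simp
            moreover have "lis i j w \<le> lis i j (l # w)" by (rule lis_Cons_ge)
            ultimately have "real (lis t j w) \<le> real (lis i j (l # w))" by linarith
            then have "\<kappa> * real (lis t j w) \<le> \<kappa> * real (lis i j (l # w))"
              using k by (rule mult_left_mono)
            then show ?thesis unfolding if_not_P[OF c] by simp
          qed
          then show ?thesis using t ij tin by (simp add: term_eq)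
        qed
      next
        show "?T \<in> ?S"
        proof (cases "i \<le> l \<and> l \<le> j \<and> lis i j w \<le> Suc (lis l j w)")
          case c: True
          then have l: "l \<in> {1..n}" using ij by auto
          have "tropA n \<kappa> l i l + F n \<kappa> w l j = ?T"
            using c ij l by (simp add: term_eq algebra_simps max_def)
          then show ?thesis using l by (intro rev_image_eqI[of l]) auto
        next
          case c: False
          have "tropA n \<kappa> l i i + F n \<kappa> w i j = ?T"
            using c ij True by (auto simp: term_eq max_def)
          then show ?thesis using ij by (intro rev_image_eqI[of i]) auto
        qed
      qed
      then show ?thesis using tm True ij by (simp add: F_def)
    qed
  qed
qed

lemma mho_F: "0 \<le> \<kappa> \<Longrightarrow> mho n \<kappa> w = F n \<kappa> w"
proof (induction w)
  case Nil show ?case by (simp add: tropE_def F_def zero_ereal_def fun_eq_iff)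
next
  case (Cons l w) then show ?case by (simp add: step_F)
qed

lemma tropE_A0: "tropE n = tropA n \<kappa> 0"
  by (auto simp: tropE_def tropA_def fun_eq_iff)

lemma F_0: "F n \<kappa> (0 # v) = F n \<kappa> v"
  by (auto simp: F_def fun_eq_iff)

lemma mho_append:
  assumes "n \<ge> 1" "0 \<le> \<kappa>"
  shows "mho n \<kappa> (u @ v) = trop_mult n (mho n \<kappa> u) (mho n \<kappa> v)"
proof (induction u)
  case Nil
  have "trop_mult n (tropE n) (mho n \<kappa> v) = mho n \<kappa> v"
    using assms by (simp add: tropE_A0[of n \<kappa>] mho_F step_F F_0)
  then show ?case by simp
next
  case (Cons l u)
  then show ?case using trop_assoc[OF assms(1)] by simp
qed

lemma mho_single: "0 \<le> \<kappa> \<Longrightarrow> mho n \<kappa> [l] = tropA n \<kappa> l"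
  by (simp only: mho_F) (auto simp: F_def tropA_def fun_eq_iff zero_ereal_def)

theorem mainTheorem7:
  fixes n :: nat and \<kappa> :: real
  assumes "n \<ge> 1" and "\<kappa> > 0"
  shows "(\<forall>u \<in> words n. \<forall>v \<in> words n.
            mho n \<kappa> (u @ v) = trop_mult n (mho n \<kappa> u) (mho n \<kappa> v))
       \<and> (\<forall>u \<in> words n. \<forall>v \<in> words n. clk_equiv n u v \<longleftrightarrow> mho n \<kappa> u = mho n \<kappa> v)
       \<and> mho n \<kappa> ` words n = gen_submonoid n \<kappa>"
proof (intro conjI ballI)
  have k: "0 \<le> \<kappa>" using assms by simp
  show "mho n \<kappa> (u @ v) = trop_mult n (mho n \<kappa> u) (mho n \<kappa> v)" for u v
    using mho_append[OF assms(1) k] .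
  show "clk_equiv n u v \<longleftrightarrow> mho n \<kappa> u = mho n \<kappa> v" for u v
  proof
    assume c: "clk_equiv n u v"
    show "mho n \<kappa> u = mho n \<kappa> v"
      using c unfolding mho_F[OF k] clk_equiv_def by (auto simp: F_def fun_eq_iff Lij_lis)
  next
    assume e: "mho n \<kappa> u = mho n \<kappa> v"
    show "clk_equiv n u v" unfolding clk_equiv_def Lij_lis
    proof (intro allI impI)
      fix i j assume ij: "1 \<le> i \<and> i \<le> j \<and> j \<le> n"
      have "F n \<kappa> u i j = F n \<kappa> v i j" using e by (simp add: mho_F[OF k])
      then have "\<kappa> * real (lis i j u) = \<kappa> * real (lis i j v)" using ij by (simp add: F_def)
      then show "lis i j u = lis i j v" using assms(2) by simp
    qed
  qed
  show "mho n \<kappa> ` words n = gen_submonoid n \<kappa>"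
  proof
    show "mho n \<kappa> ` words n \<subseteq> gen_submonoid n \<kappa>"
    proof
      fix M assume "M \<in> mho n \<kappa> ` words n"
      then obtain w where w: "w \<in> words n" "M = mho n \<kappa> w" by auto
      have "set w \<subseteq> {1..n} \<Longrightarrow> mho n \<kappa> w \<in> gen_submonoid n \<kappa>"
      proof (induction w rule: rev_induct)
        case Nil then show ?case by (simp add: gen_submonoid.unit)
      next
        case (snoc l w)
        then have "mho n \<kappa> w \<in> gen_submonoid n \<kappa>" "l \<in> {1..n}" by auto
        from gen_submonoid.step[OF this] show ?case
          by (simp only: mho_append[OF assms(1) k] mho_single[OF k])
      qed
      then show "M \<in> gen_submonoid n \<kappa>" using w by (simp add: words_def)
    qed
    show "gen_submonoid n \<kappa> \<subseteq> mho n \<kappa> ` words n"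
    proof
      fix M assume "M \<in> gen_submonoid n \<kappa>"
      then show "M \<in> mho n \<kappa> ` words n"
      proof induction
        case unit
        have "[] \<in> words n" by (simp add: words_def)
        then show ?case by (intro rev_image_eqI[of "[]"]) auto
      next
        case (step M l)
        then obtain w where w: "w \<in> words n" "M = mho n \<kappa> w" by auto
        have "w @ [l] \<in> words n" using w step by (auto simp: words_def)
        moreover have "trop_mult n M (tropA n \<kappa> l) = mho n \<kappa> (w @ [l])"
          using w by (simp only: mho_append[OF assms(1) k] mho_single[OF k])
        ultimately show ?case by (intro rev_image_eqI[of "w @ [l]"]) auto
      qed
    qed
  qed
qed

end
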